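(* Assume (MA1), (MA2), (MA3) and (MA4) hold, and let the sequences be generated by Algorithm R2N. If the algorithm generates only finitely many successful iterations, then there is $x^*\in\mathbb{R}^n$ such that $x_k=x^*$ for all sufficiently large $k$, and \[ \liminf_{k\to\infty}\nu_k^{-1/2}\xi_{cp}(x_k,\nu_k^{-1})^{1/2}=0 . \]
   Context: Setting: $f:\mathbb{R}^n\to\mathbb{R}$ continuously differentiable, $h:\mathbb{R}^n\to\mathbb{R}\cup\{+\infty\}$ proper lower semicontinuous; $\partial$ = limiting subdifferential; $\|\cdot\|$ Euclidean norm on vectors, spectral norm on matrices. A function $g$ is prox-bounded if there exist $\nu>0$, $x$ with $\inf_y g(y)+\frac1{2\nu}\|y-x\|^2>-\infty$; its threshold is the supremum of such $\nu$. For each $x$, $B(x)$ is symmetric and $\psi(\cdot;x):\mathbb{R}^n\to\mathbb{R}\cup\{+\infty\}$. $\varphi(s;x)=f(x)+\nabla f(x)^Ts+\tfrac12s^TB(x)s$, $m(s;x,\sigma)=\varphi(s;x)+\tfrac12\sigma\|s\|^2+\psi(s;x)$; $\varphi_{cp}(s;x)=f(x)+\nabla f(x)^Ts$, $m_{cp}(s;x,\nu^{-1})=\varphi_{cp}(s;x)+\tfrac12\nu^{-1}\|s\|^2+\psi(s;x)$, $P_{cp}(x,\nu^{-1})=\operatorname{argmin}_s m_{cp}(s;x,\nu^{-1})$, and for $s_{cp}\in P_{cp}(x,\nu^{-1})$, $\xi_{cp}(x,\nu^{-1})=f(x)+h(x)-(\varphi_{cp}(s_{cp};x)+\psi(s_{cp};x))$.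 (MA1): for every $x$, $\psi(\cdot;x)$ is proper, lsc, prox-bounded with threshold $\lambda_x$, $\psi(0;x)=h(x)$, $\partial\psi(0;x)=\partial h(x)$. (MA2): there is $\lambda\in(0,+\infty]$ with $\lambda_x\ge\lambda$ for all $x$ (convention $1/\infty=0$). (MA3): there is a function $\omega:[0,\infty)\to[0,\infty)$ with $\omega(t)/t\to0$ as $t\downarrow0$ such that $|h(x_k+s_k)-\psi(s_k;x_k)|\le\omega(\|s_k\|)$ for all $k$. (MA4): $\sum_{k\in\mathbb N}1/r_k=+\infty$, where $r_k:=\max_{0\le j\le k}\|B_j\|+1$. Algorithm R2N: constants $0<\theta_1<1<\theta_2$, $0<\eta_1\le\eta_2<1$, $0<\gamma_3\le1<\gamma_1\le\gamma_2$; $x_0$ with $h(x_0)<\infty$, $\sigma_0>0$. For $k=0,1,\dots$: choose symmetric $B_k=B(x_k)$; set $\nu_k=\theta_1/(\|B_k\|+\sigma_k)$; compute $s_{k,cp}\in P_{cp}(x_k,\nu_k^{-1})$ and $\xi_{cp}(x_k,\nu_k^{-1})$ (using $s_{k,cp}$); compute $s_k$ with $m(s_k;x_k,\sigma_k)\le m(s_{k,cp};x_k,\sigma_k)$; if $\|s_k\|>\theta_2\|s_{k,cp}\|$, reset $s_k=s_{k,cp}$; compute $\rho_k=\frac{(f+h)(x_k)-(f+h)(x_k+s_k)}{\varphi(0;x_k)+\psi(0;x_k)-\varphi(s_k;x_k)-\psi(s_k;x_k)}$ (extended arithmetic: $\pm\infty\cdot0=0$, $(\pm\infty)/(\pm\infty)=0$);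 if $\rho_k\ge\eta_1$ set $x_{k+1}=x_k+s_k$, else $x_{k+1}=x_k$; choose $\sigma_{k+1}\in[\gamma_3\sigma_k,\sigma_k]$ if $\rho_k\ge\eta_2$ (very successful), $\sigma_{k+1}\in[\sigma_k,\gamma_1\sigma_k]$ if $\eta_1\le\rho_k<\eta_2$, $\sigma_{k+1}\in[\gamma_1\sigma_k,\gamma_2\sigma_k]$ if $\rho_k<\eta_1$ (unsuccessful). $\mathcal S=\{k:\rho_k\ge\eta_1\}$ (successful iterations), $\mathcal S_k=\{i\in\mathcal S:i\le k\}$, $\mathcal U=\mathbb N\setminus\mathcal S$, $\mathcal U_k=\{i\in\mathcal U:i\le k\}$. *)

theory Defs
  imports "HOL-Analysis.Analysis"
begin

text \<open>Extended-real valued functions on R^n (values in R \<union> {+\<infinity>}) are modelled as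
  functions into ereal; properness excludes the value -\<infinity>.\<close>

definition proper_fun :: "('a \<Rightarrow> ereal) \<Rightarrow> bool" where
  "proper_fun g \<longleftrightarrow> (\<forall>y. g y \<noteq> -\<infinity>) \<and> (\<exists>y. g y \<noteq> \<infinity>)"

definition lsc_fun :: "('a::topological_space \<Rightarrow> ereal) \<Rightarrow> bool" where
  "lsc_fun g \<longleftrightarrow> (\<forall>x. g x \<le> Liminf (at x) g)"

definition prox_bounded :: "('a::real_normed_vector \<Rightarrow> ereal) \<Rightarrow> bool" where
  "prox_bounded g \<longleftrightarrow>
     (\<exists>\<nu>>0. \<exists>x. (INF y. g y + ereal ((norm (y - x))\<^sup>2 / (2 * \<nu>))) > -\<infinity>)"

definition prox_threshold :: "('a::real_normed_vector \<Rightarrow> ereal) \<Rightarrow> ereal" where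
  "prox_threshold g =
     Sup {ereal \<nu> | \<nu>. \<nu> > 0 \<and>
            (\<exists>x. (INF y. g y + ereal ((norm (y - x))\<^sup>2 / (2 * \<nu>))) > -\<infinity>)}"

text \<open>Frechet (regular) subdifferential: v such that
  liminf_{y\<rightarrow>x, y\<noteq>x} (g y - g x - v\<bullet>(y-x)) / |y-x| \<ge> 0, written out.\<close>
definition frechet_subdiff :: "('a::real_inner \<Rightarrow> ereal) \<Rightarrow> 'a \<Rightarrow> 'a set" where
  "frechet_subdiff g x = {v. \<bar>g x\<bar> \<noteq> \<infinity> \<and>
     (\<forall>\<epsilon>>0. \<forall>\<^sub>F y in at x.
        g y \<ge> g x + ereal (v \<bullet> (y - x) - \<epsilon> * norm (y - x)))}"

definition limiting_subdiff :: "('a::real_inner \<Rightarrow> ereal) \<Rightarrow> 'a \<Rightarrow> 'a set" where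
  "limiting_subdiff g x = {v. \<bar>g x\<bar> \<noteq> \<infinity> \<and>
     (\<exists>xs vs. xs \<longlonglongrightarrow> x \<and> (\<lambda>k. g (xs k)) \<longlonglongrightarrow> g x \<and>
        (\<forall>k. vs k \<in> frechet_subdiff g (xs k)) \<and> vs \<longlonglongrightarrow> v)}"

definition spec_norm :: "real^'n^'n \<Rightarrow> real" where
  "spec_norm A = onorm (\<lambda>v. A *v v)"

definition phi_cp :: "(real^'n \<Rightarrow> real) \<Rightarrow> (real^'n \<Rightarrow> real^'n) \<Rightarrow> real^'n \<Rightarrow> real^'n \<Rightarrow> real" where
  "phi_cp f gf x s = f x + gf x \<bullet> s"

definition phi_q :: "(real^'n \<Rightarrow> real) \<Rightarrow> (real^'n \<Rightarrow> real^'n) \<Rightarrow> real^'n^'n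
      \<Rightarrow> real^'n \<Rightarrow> real^'n \<Rightarrow> real" where
  "phi_q f gf Bx x s = f x + gf x \<bullet> s + (1/2) * (s \<bullet> (Bx *v s))"

definition m_model :: "(real^'n \<Rightarrow> real) \<Rightarrow> (real^'n \<Rightarrow> real^'n) \<Rightarrow> real^'n^'n
      \<Rightarrow> (real^'n \<Rightarrow> real^'n \<Rightarrow> ereal) \<Rightarrow> real^'n \<Rightarrow> real \<Rightarrow> real^'n \<Rightarrow> ereal" where
  "m_model f gf Bx \<psi> x \<sigma> s = ereal (phi_q f gf Bx x s + (1/2) * \<sigma> * (norm s)\<^sup>2) + \<psi> x s"

text \<open>m_cp(s; x, \<nu>^{-1}); the argument nuinv is \<nu>^{-1}.\<close>
definition m_cp :: "(real^'n \<Rightarrow> real) \<Rightarrow> (real^'n \<Rightarrow> real^'n)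
      \<Rightarrow> (real^'n \<Rightarrow> real^'n \<Rightarrow> ereal) \<Rightarrow> real^'n \<Rightarrow> real \<Rightarrow> real^'n \<Rightarrow> ereal" where
  "m_cp f gf \<psi> x nuinv s = ereal (phi_cp f gf x s + (1/2) * nuinv * (norm s)\<^sup>2) + \<psi> x s"

definition P_cp :: "(real^'n \<Rightarrow> real) \<Rightarrow> (real^'n \<Rightarrow> real^'n)
      \<Rightarrow> (real^'n \<Rightarrow> real^'n \<Rightarrow> ereal) \<Rightarrow> real^'n \<Rightarrow> real \<Rightarrow> (real^'n) set" where
  "P_cp f gf \<psi> x nuinv = {s. \<forall>t. m_cp f gf \<psi> x nuinv s \<le> m_cp f gf \<psi> x nuinv t}"

text \<open>\<xi>_cp(x, \<nu>^{-1}) computed with the chosen s_cp.\<close>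
definition xi_cp :: "(real^'n \<Rightarrow> real) \<Rightarrow> (real^'n \<Rightarrow> real^'n) \<Rightarrow> (real^'n \<Rightarrow> ereal)
      \<Rightarrow> (real^'n \<Rightarrow> real^'n \<Rightarrow> ereal) \<Rightarrow> real^'n \<Rightarrow> real^'n \<Rightarrow> ereal" where
  "xi_cp f gf h \<psi> x scp = ereal (f x) + h x - (ereal (phi_cp f gf x scp) + \<psi> x scp)"

definition esqrt :: "ereal \<Rightarrow> ereal" where
  "esqrt z = (if z = \<infinity> then \<infinity> else ereal (sqrt (real_of_ereal z)))"

end

theory Submission
  imports Defs
begin

theorem theorem5p6:
  fixes f :: "real^'n \<Rightarrow> real"
    and gf :: "real^'n \<Rightarrow> real^'n"
    and h :: "real^'n \<Rightarrow> ereal"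
    and \<psi> :: "real^'n \<Rightarrow> real^'n \<Rightarrow> ereal"
    and B :: "real^'n \<Rightarrow> real^'n^'n"
    and \<theta>1 \<theta>2 \<eta>1 \<eta>2 \<gamma>1 \<gamma>2 \<gamma>3 :: real
    and x :: "nat \<Rightarrow> real^'n"
    and \<sigma> \<nu> :: "nat \<Rightarrow> real"
    and scp st s :: "nat \<Rightarrow> real^'n"
    and \<rho> :: "nat \<Rightarrow> ereal"
    and \<omega> :: "real \<Rightarrow> real"
    and lam :: ereal
  assumes f_grad: "\<And>y. (f has_derivative (\<lambda>v. gf y \<bullet> v)) (at y)"
    and f_C1: "continuous_on UNIV gf"
    and h_proper: "proper_fun h" and h_lsc: "lsc_fun h"
    and B_sym: "\<And>y. transpose (B y) = B y"
    (* (MA1) *)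
    and MA1: "\<And>y. proper_fun (\<psi> y) \<and> lsc_fun (\<psi> y) \<and> prox_bounded (\<psi> y)
               \<and> \<psi> y 0 = h y \<and> limiting_subdiff (\<psi> y) 0 = limiting_subdiff h y"
    (* (MA2) *)
    and MA2: "lam > 0" "\<And>y. prox_threshold (\<psi> y) \<ge> lam"
    (* (MA3) *)
    and MA3_omega: "\<And>t. t \<ge> 0 \<Longrightarrow> \<omega> t \<ge> 0"
    and MA3_lim: "((\<lambda>t. \<omega> t / t) \<longlongrightarrow> 0) (at_right 0)"
    and MA3: "\<And>k. \<bar>h (x k + s k) - \<psi> (x k) (s k)\<bar> \<le> ereal (\<omega> (norm (s k)))"
    (* (MA4) *)
    and MA4: "\<not> summable (\<lambda>k. 1 / (Max ((\<lambda>j. spec_norm (B (x j))) ` {..k}) + 1))"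
    (* algorithm constants *)
    and params: "0 < \<theta>1" "\<theta>1 < 1" "1 < \<theta>2" "0 < \<eta>1" "\<eta>1 \<le> \<eta>2" "\<eta>2 < 1"
                "0 < \<gamma>3" "\<gamma>3 \<le> 1" "1 < \<gamma>1" "\<gamma>1 \<le> \<gamma>2"
    and init: "h (x 0) < \<infinity>" "\<sigma> 0 > 0"
    (* the iteration of R2N *)
    and nu_def: "\<And>k. \<nu> k = \<theta>1 / (spec_norm (B (x k)) + \<sigma> k)"
    and scp_def: "\<And>k. scp k \<in> P_cp f gf \<psi> (x k) (1 / \<nu> k)"
    and st_def: "\<And>k. m_model f gf (B (x k)) \<psi> (x k) (\<sigma> k) (st k)
                     \<le> m_model f gf (B (x k)) \<psi> (x k) (\<sigma> k) (scp k)"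
    and s_def: "\<And>k. s k = (if norm (st k) > \<theta>2 * norm (scp k) then scp k else st k)"
    and rho_def: "\<And>k. \<rho> k =
          (ereal (f (x k)) + h (x k) - (ereal (f (x k + s k)) + h (x k + s k))) /
          (ereal (phi_q f gf (B (x k)) (x k) 0) + \<psi> (x k) 0
             - ereal (phi_q f gf (B (x k)) (x k) (s k)) - \<psi> (x k) (s k))"
    and x_upd: "\<And>k. x (Suc k) = (if \<rho> k \<ge> ereal \<eta>1 then x k + s k else x k)"
    and sigma_vs: "\<And>k. \<rho> k \<ge> ereal \<eta>2 \<Longrightarrow> \<gamma>3 * \<sigma> k \<le> \<sigma> (Suc k) \<and> \<sigma> (Suc k) \<le> \<sigma> k"
    and sigma_s: "\<And>k. ereal \<eta>1 \<le> \<rho> k \<Longrightarrow> \<rho> k < ereal \<eta>2 \<Longrightarrow>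
                     \<sigma> k \<le> \<sigma> (Suc k) \<and> \<sigma> (Suc k) \<le> \<gamma>1 * \<sigma> k"
    and sigma_u: "\<And>k. \<rho> k < ereal \<eta>1 \<Longrightarrow>
                     \<gamma>1 * \<sigma> k \<le> \<sigma> (Suc k) \<and> \<sigma> (Suc k) \<le> \<gamma>2 * \<sigma> k"
    (* finitely many successful iterations *)
    and fin_succ: "finite {k. \<rho> k \<ge> ereal \<eta>1}"
  shows "(\<exists>xstar. \<forall>\<^sub>F k in sequentially. x k = xstar) \<and>
         Liminf sequentially
           (\<lambda>k. ereal (sqrt (1 / \<nu> k)) * esqrt (xi_cp f gf h \<psi> (x k) (scp k))) = 0"
proof -
  have sig_pos: "\<And>k. \<sigma> k > 0"
  proof -
    fix k show "\<sigma> k > 0"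
    proof (induction k)
      case 0 then show ?case using init by simp
    next
      case (Suc k)
      show ?case
      proof (cases "\<rho> k \<ge> ereal \<eta>2")
        case True then show ?thesis using sigma_vs[of k] Suc params
          by (smt (verit) mult_pos_pos)
      next
        case F: False
        show ?thesis
        proof (cases "\<rho> k \<ge> ereal \<eta>1")
          case True then show ?thesis using sigma_s[of k] F Suc by (smt (verit) not_le)
        next
          case False then show ?thesis using sigma_u[of k] Suc params
            by (smt (verit) mult_pos_pos not_le)
        qed
      qed
    qed
  qed
  have bnn: "\<And>A. spec_norm A \<ge> 0"
    unfolding spec_norm_def by (rule onorm_pos_le[OF matrix_vector_mul_bounded_linear])
  have nu_pos: "\<And>k. \<nu> k > 0" using nu_def sig_pos bnn params
    by (metis add_nonneg_pos divide_pos_pos)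
  have psi_nm: "\<And>y v. \<psi> y v \<noteq> -\<infinity>" using MA1 unfolding proper_fun_def by blast
  have h_nm: "\<And>y. h y \<noteq> -\<infinity>" using h_proper unfolding proper_fun_def by blast
  have psi0: "\<And>y. \<psi> y 0 = h y" using MA1 by blast
  have fin_step: "\<And>k. h (x k) \<noteq> \<infinity> \<Longrightarrow>
      \<bar>\<psi> (x k) (scp k)\<bar> \<noteq> \<infinity> \<and> \<bar>\<psi> (x k) (s k)\<bar> \<noteq> \<infinity> \<and> \<bar>h (x k + s k)\<bar> \<noteq> \<infinity>"
  proof -
    fix k assume hk: "h (x k) \<noteq> \<infinity>"
    have "m_cp f gf \<psi> (x k) (1 / \<nu> k) (scp k) \<le> m_cp f gf \<psi> (x k) (1 / \<nu> k) 0"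
      using scp_def[of k] unfolding P_cp_def by blast
    also have "\<dots> < \<infinity>" unfolding m_cp_def psi0 using hk by simp
    finally have c1: "\<psi> (x k) (scp k) < \<infinity>" unfolding m_cp_def by auto
    have c2: "\<psi> (x k) (s k) < \<infinity>"
    proof (cases "s k = scp k")
      case True then show ?thesis using c1 by simp
    next
      case False
      then have ss: "s k = st k" using s_def[of k] by (auto split: if_splits)
      have "m_model f gf (B (x k)) \<psi> (x k) (\<sigma> k) (scp k) < \<infinity>"
        unfolding m_model_def using c1 by simp
      then have "m_model f gf (B (x k)) \<psi> (x k) (\<sigma> k) (st k) < \<infinity>"
        using st_def[of k] by (meson le_less_trans)
      then show ?thesis unfolding ss m_model_def by auto
    qed
    have c3: "h (x k + s k) \<noteq> \<infinity>"
    proof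
      assume "h (x k + s k) = \<infinity>"
      then have "\<bar>h (x k + s k) - \<psi> (x k) (s k)\<bar> = \<infinity>" using c2 by auto
      then show False using MA3[of k] by simp
    qed
    show "\<bar>\<psi> (x k) (scp k)\<bar> \<noteq> \<infinity> \<and> \<bar>\<psi> (x k) (s k)\<bar> \<noteq> \<infinity> \<and> \<bar>h (x k + s k)\<bar> \<noteq> \<infinity>"
      using c1 c2 c3 psi_nm h_nm by auto
  qed
  have hfin: "\<And>k. h (x k) \<noteq> \<infinity>"
  proof -
    fix k show "h (x k) \<noteq> \<infinity>"
    proof (induction k)
      case 0 then show ?case using init by simp
    next
      case (Suc k) then show ?case using fin_step[of k] x_upd[of k] by auto
    qed
  qed
  obtain K where K: "\<And>k. k \<ge> K \<Longrightarrow> \<rho> k < ereal \<eta>1"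
  proof -
    obtain N where "\<forall>k\<in>{k. \<rho> k \<ge> ereal \<eta>1}. k < N"
      using fin_succ finite_nat_set_iff_bounded by blast
    then show ?thesis using that[of N] by (meson mem_Collect_eq not_le)
  qed
  define xs where "xs = x K"
  have xK: "\<And>k. k \<ge> K \<Longrightarrow> x k = xs"
  proof -
    fix k assume "k \<ge> K" then show "x k = xs"
    proof (induction k rule: nat_induct_at_least)
      case base then show ?case by (simp add: xs_def)
    next
      case (Suc n) then show ?case using x_upd[of n] K[of n] by auto
    qed
  qed
  have part1: "\<exists>xstar. \<forall>\<^sub>F k in sequentially. x k = xstar"
    using xK by (auto simp: eventually_sequentially)
  have sigK: "\<And>k. k \<ge> K \<Longrightarrow> \<sigma> k \<ge> \<gamma>1 ^ (k - K) * \<sigma> K"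
  proof -
    fix k assume "k \<ge> K" then show "\<sigma> k \<ge> \<gamma>1 ^ (k - K) * \<sigma> K"
    proof (induction k rule: nat_induct_at_least)
      case base then show ?case by simp
    next
      case (Suc n)
      have "\<sigma> (Suc n) \<ge> \<gamma>1 * \<sigma> n" using sigma_u[OF K[OF Suc(1)]] by simp
      moreover have "\<gamma>1 * \<sigma> n \<ge> \<gamma>1 * (\<gamma>1 ^ (n - K) * \<sigma> K)"
        using Suc(2) params by (simp add: mult_left_mono)
      moreover have "Suc n - K = Suc (n - K)" using Suc(1) by simp
      ultimately show ?case by (simp add: mult.assoc)
    qed
  qed
  have nu_small: "\<And>t. t > 0 \<Longrightarrow> \<forall>\<^sub>F k in sequentially. \<nu> k \<le> t"
  proof -
    fix t :: real assume t: "t > 0"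
    obtain n where n: "\<theta>1 / t / \<sigma> K < \<gamma>1 ^ n" using real_arch_pow params by blast
    have "\<nu> k \<le> t" if k: "k \<ge> K + n" for k
    proof -
      have "\<gamma>1 ^ n \<le> \<gamma>1 ^ (k - K)" using k params by (intro power_increasing) auto
      then have "\<theta>1 / t / \<sigma> K * \<sigma> K < \<gamma>1 ^ (k - K) * \<sigma> K" using n sig_pos[of K]
        by (intro mult_strict_right_mono) auto
      then have "\<theta>1 / t < \<sigma> k" using sigK[of k] k sig_pos[of K] by simp
      then have "\<theta>1 < t * \<sigma> k" using t by (simp add: field_simps)
      also have "\<dots> \<le> t * (spec_norm (B (x k)) + \<sigma> k)" using bnn t by simp
      moreover have "spec_norm (B (x k)) + \<sigma> k > 0" using bnn[of "B (x k)"] sig_pos[of k] by simp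
      ultimately show ?thesis unfolding nu_def[of k]
        by (simp add: divide_le_eq mult.commute)
    qed
    then show "\<forall>\<^sub>F k in sequentially. \<nu> k \<le> t" unfolding eventually_sequentially by blast
  qed
  define g where "g = gf xs"
  define Bm where "Bm = B xs"
  define bn where "bn = spec_norm Bm"
  define H where "H = real_of_ereal (h xs)"
  define P where "P k = real_of_ereal (\<psi> xs (scp k))" for k
  define Q where "Q k = real_of_ereal (\<psi> xs (s k))" for k
  define Hs where "Hs k = real_of_ereal (h (xs + s k))" for k
  define xr where "xr k = H - g \<bullet> scp k - P k" for k
  define A where "A k = f xs + H - f (xs + s k) - Hs k" for k
  define D where "D k = H - g \<bullet> s k - (1/2) * (s k \<bullet> (Bm *v s k)) - Q k" for k
  have hH: "h xs = ereal H" unfolding H_def using hfin[of K] h_nm[of xs] xs_def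
    by (metis abs_ereal_uminus ereal_real' ereal_uminus_uminus infinity_ereal_def abs_eq_infinity_cases)
  have fins: "\<And>k. k \<ge> K \<Longrightarrow> \<psi> xs (scp k) = ereal (P k) \<and> \<psi> xs (s k) = ereal (Q k)
       \<and> h (xs + s k) = ereal (Hs k)"
    using fin_step hfin xK unfolding P_def Q_def Hs_def by (metis ereal_real')
  have bnn': "bn \<ge> 0" unfolding bn_def by (rule bnn)
  have quad: "\<And>v. \<bar>v \<bullet> (Bm *v v)\<bar> \<le> bn * (norm v)\<^sup>2"
  proof -
    fix v :: "real^'n"
    have "\<bar>v \<bullet> (Bm *v v)\<bar> \<le> norm v * norm (Bm *v v)" by (rule Cauchy_Schwarz_ineq2)
    also have "\<dots> \<le> norm v * (bn * norm v)"
      unfolding bn_def spec_norm_def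
      by (intro mult_left_mono onorm[OF matrix_vector_mul_bounded_linear]) auto
    finally show "\<bar>v \<bullet> (Bm *v v)\<bar> \<le> bn * (norm v)\<^sup>2" by (simp add: power2_eq_square algebra_simps)
  qed
  have xi_eq: "\<And>k. k \<ge> K \<Longrightarrow> xi_cp f gf h \<psi> (x k) (scp k) = ereal (xr k)"
    using fins xK unfolding xi_cp_def phi_cp_def xr_def g_def by (simp add: hH)
  have cpdec: "\<And>k. k \<ge> K \<Longrightarrow> g \<bullet> scp k + (1/2) * (1 / \<nu> k) * (norm (scp k))\<^sup>2 + P k \<le> H"
  proof -
    fix k assume k: "k \<ge> K"
    have "m_cp f gf \<psi> (x k) (1 / \<nu> k) (scp k) \<le> m_cp f gf \<psi> (x k) (1 / \<nu> k) 0"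
      using scp_def[of k] unfolding P_cp_def by blast
    then show "g \<bullet> scp k + (1/2) * (1 / \<nu> k) * (norm (scp k))\<^sup>2 + P k \<le> H"
      using fins[OF k] xK[OF k] unfolding m_cp_def phi_cp_def g_def psi0 by (simp add: hH)
  qed
  have mdec: "\<And>k. k \<ge> K \<Longrightarrow> g \<bullet> s k + (1/2) * (s k \<bullet> (Bm *v s k)) + (1/2) * \<sigma> k * (norm (s k))\<^sup>2 + Q k
      \<le> g \<bullet> scp k + (1/2) * (scp k \<bullet> (Bm *v scp k)) + (1/2) * \<sigma> k * (norm (scp k))\<^sup>2 + P k"
  proof -
    fix k assume k: "k \<ge> K"
    show "g \<bullet> s k + (1/2) * (s k \<bullet> (Bm *v s k)) + (1/2) * \<sigma> k * (norm (s k))\<^sup>2 + Q k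
      \<le> g \<bullet> scp k + (1/2) * (scp k \<bullet> (Bm *v scp k)) + (1/2) * \<sigma> k * (norm (scp k))\<^sup>2 + P k"
    proof (cases "s k = scp k")
      case True then show ?thesis using fins[OF k] unfolding P_def Q_def by simp
    next
      case False
      then have ss: "s k = st k" using s_def[of k] by (auto split: if_splits)
      show ?thesis using st_def[of k] fins[OF k] xK[OF k] unfolding m_model_def phi_q_def g_def Bm_def ss
        by simp
    qed
  qed
  have snorm: "\<And>k. norm (s k) \<le> \<theta>2 * norm (scp k)"
    using s_def params by (smt (verit) mult_le_cancel_right1 norm_ge_zero)
  have rho_eq: "\<And>k. k \<ge> K \<Longrightarrow> D k \<noteq> 0 \<Longrightarrow> \<rho> k = ereal (A k / D k)"
  proof -
    fix k assume k: "k \<ge> K" and D0: "D k \<noteq> 0"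
    have n: "ereal (f (x k)) + h (x k) - (ereal (f (x k + s k)) + h (x k + s k)) = ereal (A k)"
      unfolding xK[OF k] using fins[OF k] by (simp add: hH A_def)
    have d: "ereal (phi_q f gf (B (x k)) (x k) 0) + \<psi> (x k) 0
             - ereal (phi_q f gf (B (x k)) (x k) (s k)) - \<psi> (x k) (s k) = ereal (D k)"
      unfolding xK[OF k] psi0 using fins[OF k] by (simp add: hH D_def phi_q_def g_def Bm_def)
    have "\<rho> k = ereal (A k) / ereal (D k)"
      unfolding rho_def[of k] n d by simp
    then show "\<rho> k = ereal (A k / D k)" using D0 by simp
  qed
  have omb: "\<And>k. k \<ge> K \<Longrightarrow> \<bar>Q k - Hs k\<bar> \<le> \<omega> (norm (s k))"
  proof -
    fix k assume k: "k \<ge> K"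
    have "\<bar>h (x k + s k) - \<psi> (x k) (s k)\<bar> = ereal \<bar>Q k - Hs k\<bar>"
      unfolding xK[OF k] using fins[OF k] by (simp add: abs_minus_commute)
    then show "\<bar>Q k - Hs k\<bar> \<le> \<omega> (norm (s k))" using MA3[of k] by simp
  qed
  have s0: "\<And>k. k \<ge> K \<Longrightarrow> s k = 0 \<Longrightarrow> Q k = Hs k"
    unfolding Q_def Hs_def using psi0 by simp
  obtain c0 nu0 where nu0: "nu0 > 0" and c0: "\<And>y. \<bar>\<psi> xs y\<bar> \<noteq> \<infinity> \<Longrightarrow>
      real_of_ereal (\<psi> xs y) \<ge> c0 - (norm y)\<^sup>2 / nu0"
  proof -
    obtain nu x0 where nu: "nu > 0" and I: "(INF y. \<psi> xs y + ereal ((norm (y - x0))\<^sup>2 / (2 * nu))) > -\<infinity>"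
      using MA1[of xs] unfolding prox_bounded_def by blast
    define I where "I = (INF y. \<psi> xs y + ereal ((norm (y - x0))\<^sup>2 / (2 * nu)))"
    obtain c where c: "ereal c \<le> I"
    proof (cases I)
      case (real r) then show ?thesis using that[of r] by simp
    next
      case PInf then show ?thesis using that[of 0] by simp
    next
      case MInf then show ?thesis using I I_def by simp
    qed
    have "real_of_ereal (\<psi> xs y) \<ge> (c - (norm x0)\<^sup>2 / nu) - (norm y)\<^sup>2 / nu"
      if fy: "\<bar>\<psi> xs y\<bar> \<noteq> \<infinity>" for y
    proof -
      have "ereal c \<le> \<psi> xs y + ereal ((norm (y - x0))\<^sup>2 / (2 * nu))"
        using c unfolding I_def by (meson INF_lower UNIV_I order_trans)
      then have c1: "c \<le> real_of_ereal (\<psi> xs y) + (norm (y - x0))\<^sup>2 / (2 * nu)"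
        using fy by (metis ereal_less_eq(3) ereal_real' plus_ereal.simps(1))
      have "norm (y - x0) \<le> norm y + norm x0" by (rule norm_triangle_ineq4)
      then have "(norm (y - x0))\<^sup>2 \<le> (norm y + norm x0)\<^sup>2" by (simp add: power_mono)
      also have "\<dots> \<le> 2 * (norm y)\<^sup>2 + 2 * (norm x0)\<^sup>2"
        by (smt (verit) sum_squares_bound power2_sum sum_power2_ge_zero)
      finally have "(norm (y - x0))\<^sup>2 / (2 * nu) \<le> (2 * (norm y)\<^sup>2 + 2 * (norm x0)\<^sup>2) / (2 * nu)"
        using nu by (simp add: divide_right_mono)
      also have "\<dots> = (norm y)\<^sup>2 / nu + (norm x0)\<^sup>2 / nu" using nu by (simp add: field_simps)
      finally show ?thesis using c1 by simp
    qed
    then show ?thesis using that nu by blast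
  qed
  have I1: "\<And>k. k \<ge> K \<Longrightarrow> (norm (scp k))\<^sup>2 / (2 * \<nu> k) \<le> xr k"
    using cpdec unfolding xr_def by (simp add: field_simps)
  have sigb: "\<And>k. k \<ge> K \<Longrightarrow> bn + \<sigma> k = \<theta>1 / \<nu> k"
  proof -
    fix k assume k: "k \<ge> K"
    have pos: "bn + \<sigma> k > 0" using bnn' sig_pos[of k] by simp
    have "\<nu> k = \<theta>1 / (bn + \<sigma> k)" using nu_def[of k] xK[OF k] unfolding bn_def Bm_def by simp
    then show "bn + \<sigma> k = \<theta>1 / \<nu> k" using pos params nu_pos[of k] by (simp add: field_simps)
  qed
  have I2: "\<And>k. k \<ge> K \<Longrightarrow> D k \<ge> (1 - \<theta>1) * xr k"
  proof -
    fix k assume k: "k \<ge> K"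
    define t where "t = norm (scp k)"
    have q1: "scp k \<bullet> (Bm *v scp k) \<le> bn * t\<^sup>2" using quad[of "scp k"] unfolding t_def by simp
    have q2: "(1/2) * \<sigma> k * (norm (s k))\<^sup>2 \<ge> 0" using sig_pos[of k] by simp
    have "D k \<ge> xr k - (1/2) * (bn + \<sigma> k) * t\<^sup>2"
      using mdec[OF k] q1 q2 unfolding D_def xr_def t_def by (simp add: algebra_simps add_divide_distrib; linarith)
    moreover have "(1/2) * (bn + \<sigma> k) * t\<^sup>2 = \<theta>1 * (t\<^sup>2 / (2 * \<nu> k))" using sigb[OF k] by simp
    moreover have "\<theta>1 * (t\<^sup>2 / (2 * \<nu> k)) \<le> \<theta>1 * xr k" using I1[OF k] params unfolding t_def by (intro mult_left_mono) auto
    ultimately show "D k \<ge> (1 - \<theta>1) * xr k" by (simp add: algebra_simps)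
  qed
  define W where "W = \<bar>H - c0\<bar> + norm g"
  have Wnn: "W \<ge> 0" unfolding W_def by simp
  have I4: "\<And>k. k \<ge> K \<Longrightarrow> \<nu> k \<le> nu0 / 4 \<Longrightarrow> \<nu> k < 1 / (8 * W + 1) \<Longrightarrow>
      (norm (scp k))\<^sup>2 \<le> 8 * \<nu> k * W"
  proof -
    fix k assume k: "k \<ge> K" and n1: "\<nu> k \<le> nu0 / 4" and n2: "\<nu> k < 1 / (8 * W + 1)"
    define t where "t = norm (scp k)"
    have tnn: "t \<ge> 0" unfolding t_def by simp
    have nk: "\<nu> k > 0" by (rule nu_pos)
    have "\<bar>\<psi> xs (scp k)\<bar> \<noteq> \<infinity>" using fins[OF k] by simp
    then have P1: "P k \<ge> c0 - t\<^sup>2 / nu0" using c0[of "scp k"] unfolding P_def t_def by simp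
    have g1: "g \<bullet> scp k \<ge> - (norm g * t)" unfolding t_def
      by (metis Cauchy_Schwarz_ineq2 abs_le_iff minus_le_iff)
    have a1: "t\<^sup>2 / (2 * \<nu> k) \<le> H - c0 + norm g * t + t\<^sup>2 / nu0"
      using I1[OF k] P1 g1 unfolding xr_def t_def by linarith
    have a2: "t\<^sup>2 / nu0 \<le> t\<^sup>2 / (4 * \<nu> k)" using n1 nk nu0
      by (intro divide_left_mono) (auto simp: field_simps)
    have a3: "t\<^sup>2 / (2 * \<nu> k) = t\<^sup>2 / (4 * \<nu> k) + t\<^sup>2 / (4 * \<nu> k)" by (simp add: field_simps)
    have gw: "norm g * t \<le> W * t" using tnn unfolding W_def by (intro mult_right_mono) auto
    have "H - c0 \<le> \<bar>H - c0\<bar>" by simp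
    then have "t\<^sup>2 / (4 * \<nu> k) \<le> W * (1 + t)"
    proof -
      have "W * (1 + t) = W + W * t" by (simp add: algebra_simps)
      moreover have "norm g \<ge> 0" by simp
      ultimately show ?thesis using a1 a2 a3 gw \<open>H - c0 \<le> \<bar>H - c0\<bar>\<close> unfolding W_def by linarith
    qed
    then have a4: "t\<^sup>2 \<le> 4 * \<nu> k * W * (1 + t)" using nk by (simp add: field_simps)
    have nW: "8 * \<nu> k * W < 1" using n2 Wnn nk by (simp add: field_simps)
    have t1: "t < 1"
    proof (rule ccontr)
      assume "\<not> t < 1"
      then have "t \<ge> 1" by simp
      then have "4 * \<nu> k * W * (1 + t) \<le> 4 * \<nu> k * W * (2 * t)" using nk Wnn
        by (intro mult_left_mono) auto
      with a4 have "t * t \<le> (8 * \<nu> k * W) * t" by (simp add: power2_eq_square algebra_simps)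
      then have "t \<le> 8 * \<nu> k * W" using \<open>t \<ge> 1\<close> by simp
      then show False using nW \<open>t \<ge> 1\<close> by simp
    qed
    have "4 * \<nu> k * W * (1 + t) \<le> 4 * \<nu> k * W * 2" using nk Wnn t1 by (intro mult_left_mono) auto
    then have "t\<^sup>2 \<le> 4 * \<nu> k * W * 2" using a4 by linarith
    then show "(norm (scp k))\<^sup>2 \<le> 8 * \<nu> k * W" using a4 unfolding t_def by simp
  qed
  have xr_nn: "\<And>k. k \<ge> K \<Longrightarrow> xr k \<ge> 0"
    using I1 nu_pos by (smt (verit) divide_nonneg_pos mult_pos_pos zero_le_power2)
  have key: "\<And>e. e > 0 \<Longrightarrow> \<not> (\<forall>\<^sub>F k in sequentially. e < sqrt (1 / \<nu> k) * sqrt (xr k))"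
  proof
    fix e :: real assume e: "e > 0" and ev: "\<forall>\<^sub>F k in sequentially. e < sqrt (1 / \<nu> k) * sqrt (xr k)"
    define c where "c = (1 - \<eta>1) * (1 - \<theta>1) * e / (2 * \<theta>2)"
    have cpos: "c > 0" unfolding c_def using params e by simp
    define \<delta> where "\<delta> = c / 3"
    have dpos: "\<delta> > 0" unfolding \<delta>_def using cpos by simp
    obtain rf where rf: "rf > 0" "\<And>y. norm (y - xs) < rf \<Longrightarrow>
        \<bar>f y - f xs - g \<bullet> (y - xs)\<bar> \<le> \<delta> * norm (y - xs)"
      using f_grad[of xs] dpos unfolding has_derivative_at_alt g_def real_norm_def by blast
    obtain rw where rw: "rw > 0" "\<And>t. 0 < t \<Longrightarrow> t < rw \<Longrightarrow> \<omega> t \<le> \<delta> * t"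
    proof -
      have "\<forall>\<^sub>F t in at_right 0. dist (\<omega> t / t) 0 < \<delta>" using tendstoD[OF MA3_lim dpos] .
      then obtain b0 where b0: "b0 > 0" "\<And>t. t > 0 \<Longrightarrow> t < b0 \<Longrightarrow> dist (\<omega> t / t) 0 < \<delta>"
        unfolding eventually_at_right_field by auto
      have "\<omega> t \<le> \<delta> * t" if "0 < t" "t < b0" for t
      proof -
        have "\<bar>\<omega> t / t\<bar> < \<delta>" using b0(2)[OF that] by (simp only: dist_real_def diff_zero)
        then have "\<omega> t / t < \<delta>" by (meson abs_ge_self le_less_trans)
        then show ?thesis using that(1) by (simp add: divide_less_eq)
      qed
      then show ?thesis using that b0(1) by blast
    qed
    define r where "r = min rf (min rw (2 * \<delta> / (bn + 1)))"
    have rpos: "r > 0" unfolding r_def using rf rw dpos bnn' by simp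
    define a1 where "a1 = 1 / (8 * W + 1)"
    define a2 where "a2 = r\<^sup>2 / (8 * \<theta>2\<^sup>2 * W + 1)"
    have a1pos: "a1 > 0" unfolding a1_def using Wnn by simp
    have a2pos: "a2 > 0" unfolding a2_def using Wnn rpos by (simp add: add_nonneg_pos)
    have p0: "nu0 / 4 > 0" "a1 / 2 > 0" "a2 / 2 > 0" using nu0 a1pos a2pos by auto
    have "\<forall>\<^sub>F k in sequentially. k \<ge> K \<and> \<nu> k \<le> nu0 / 4 \<and> \<nu> k \<le> a1 / 2 \<and> \<nu> k \<le> a2 / 2
        \<and> e < sqrt (1 / \<nu> k) * sqrt (xr k)"
      by (rule eventually_conj[OF eventually_ge_at_top[of K] eventually_conj[OF nu_small[OF p0(1)]
        eventually_conj[OF nu_small[OF p0(2)] eventually_conj[OF nu_small[OF p0(3)] ev]]]])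
    then obtain N where "\<And>n. n \<ge> N \<Longrightarrow> n \<ge> K \<and> \<nu> n \<le> nu0 / 4 \<and> \<nu> n \<le> a1 / 2 \<and> \<nu> n \<le> a2 / 2
        \<and> e < sqrt (1 / \<nu> n) * sqrt (xr n)" unfolding eventually_sequentially by blast
    then have PN: "N \<ge> K \<and> \<nu> N \<le> nu0 / 4 \<and> \<nu> N \<le> a1 / 2 \<and> \<nu> N \<le> a2 / 2
        \<and> e < sqrt (1 / \<nu> N) * sqrt (xr N)" by blast
    define k where "k = N"
    have k: "k \<ge> K" and n0: "\<nu> k \<le> nu0 / 4" and n1: "\<nu> k < a1" and n2: "\<nu> k < a2"
      and ek: "e < sqrt (1 / \<nu> k) * sqrt (xr k)"
      using PN a1pos a2pos unfolding k_def by auto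
    have nk: "\<nu> k > 0" by (rule nu_pos)
    have xk0: "xr k \<ge> 0" using xr_nn[OF k] .
    define t where "t = norm (scp k)"
    define sn where "sn = norm (s k)"
    have snn: "sn \<ge> 0" unfolding sn_def by simp
    have tt: "t\<^sup>2 \<le> 8 * \<nu> k * W" using I4[OF k n0] n1 unfolding a1_def t_def by simp
    have st: "sn \<le> \<theta>2 * t" using snorm[of k] unfolding sn_def t_def .
    have sq: "sn\<^sup>2 \<le> \<theta>2\<^sup>2 * t\<^sup>2"
      using st snn by (metis power_mono power_mult_distrib)
    have "sqrt (1 / \<nu> k) * sqrt (xr k) = sqrt (xr k / \<nu> k)" by (simp add: real_sqrt_mult[symmetric])
    with ek have "e\<^sup>2 < (sqrt (xr k / \<nu> k))\<^sup>2" using e by (intro power_strict_mono) auto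
    then have "e\<^sup>2 < xr k / \<nu> k" using xk0 nk by simp
    then have exr: "e\<^sup>2 * \<nu> k < xr k" using nk by (simp add: field_simps)
    have xpos: "xr k > 0" using exr e nk by (smt (verit) mult_pos_pos zero_less_power)
    have "sn\<^sup>2 \<le> \<theta>2\<^sup>2 * (8 * \<nu> k * W)" using sq tt by (smt (verit) mult_left_mono zero_le_power2)
    also have "\<dots> < r\<^sup>2"
    proof -
      have den: "8 * \<theta>2\<^sup>2 * W + 1 > 0" using Wnn by (simp add: add_nonneg_pos)
      have "\<nu> k * (8 * \<theta>2\<^sup>2 * W + 1) < r\<^sup>2" using n2 pos_less_divide_eq[OF den] unfolding a2_def
        by blast
      then show ?thesis using nk by (simp add: algebra_simps)
    qed
    finally have "sn < r" using rpos snn by (simp add: power_less_imp_less_base)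
    then have sr: "sn < rf" "sn < rw" "sn < 2 * \<delta> / (bn + 1)" unfolding r_def by auto
    have tx: "t\<^sup>2 \<le> 2 * \<nu> k * xr k" using I1[OF k] nk unfolding t_def by (simp add: field_simps)
    have c1: "(e * sn)\<^sup>2 = e\<^sup>2 * sn\<^sup>2" by (rule power_mult_distrib)
    have c2: "e\<^sup>2 * sn\<^sup>2 \<le> e\<^sup>2 * (\<theta>2\<^sup>2 * (2 * \<nu> k * xr k))"
    proof -
      have "\<theta>2\<^sup>2 * t\<^sup>2 \<le> \<theta>2\<^sup>2 * (2 * \<nu> k * xr k)" using tx by (intro mult_left_mono) auto
      then have "sn\<^sup>2 \<le> \<theta>2\<^sup>2 * (2 * \<nu> k * xr k)" using sq by linarith
      then show ?thesis by (intro mult_left_mono) auto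
    qed
    have c3: "e\<^sup>2 * (\<theta>2\<^sup>2 * (2 * \<nu> k * xr k)) = (2 * \<theta>2\<^sup>2 * xr k) * (e\<^sup>2 * \<nu> k)"
      by (simp only: mult_ac)
    have c4: "(2 * \<theta>2\<^sup>2 * xr k) * (e\<^sup>2 * \<nu> k) \<le> (2 * \<theta>2\<^sup>2 * xr k) * xr k"
      using exr xk0 by (intro mult_left_mono) auto
    have c5: "(2 * \<theta>2\<^sup>2 * xr k) * xr k \<le> (2 * \<theta>2 * xr k)\<^sup>2"
    proof -
      have "0 \<le> \<theta>2\<^sup>2 * (xr k * xr k)" using xk0 by simp
      moreover have "(2 * \<theta>2 * xr k)\<^sup>2 = 4 * (\<theta>2\<^sup>2 * (xr k * xr k))" by (simp add: power2_eq_square mult_ac)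
      moreover have "(2 * \<theta>2\<^sup>2 * xr k) * xr k = 2 * (\<theta>2\<^sup>2 * (xr k * xr k))" by (simp add: mult_ac)
      ultimately show ?thesis by linarith
    qed
    have c6: "(e * sn)\<^sup>2 \<le> (2 * \<theta>2 * xr k)\<^sup>2" using c1 c2 c3 c4 c5 by linarith
    have "0 \<le> 2 * \<theta>2 * xr k" using params xk0 by simp
    then have "e * sn \<le> 2 * \<theta>2 * xr k" using c6 power2_le_imp_le by blast
    then have esn: "e * sn \<le> 2 * \<theta>2 * xr k" .
    have k0: "(1 - \<eta>1) * (1 - \<theta>1) / (2 * \<theta>2) \<ge> 0" using params by simp
    have "c * sn = (1 - \<eta>1) * (1 - \<theta>1) / (2 * \<theta>2) * (e * sn)" unfolding c_def by simp
    also have "\<dots> \<le> (1 - \<eta>1) * (1 - \<theta>1) / (2 * \<theta>2) * (2 * \<theta>2 * xr k)"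
      by (rule mult_left_mono[OF esn k0])
    also have "\<dots> = (1 - \<eta>1) * ((1 - \<theta>1) * xr k)" using params by simp
    finally have csn: "c * sn \<le> (1 - \<eta>1) * ((1 - \<theta>1) * xr k)" .
    have T1: "\<bar>f (xs + s k) - f xs - g \<bullet> s k\<bar> \<le> \<delta> * sn"
      using rf(2)[of "xs + s k"] sr(1) unfolding sn_def by simp
    have T2: "\<bar>s k \<bullet> (Bm *v s k)\<bar> \<le> 2 * \<delta> * sn"
    proof -
      have b1: "bn + 1 > 0" using bnn' by simp
      have "\<bar>s k \<bullet> (Bm *v s k)\<bar> \<le> bn * sn\<^sup>2" using quad unfolding sn_def by simp
      also have "\<dots> \<le> (bn + 1) * sn * sn" using snn by (simp add: power2_eq_square algebra_simps)
      also have "\<dots> \<le> (bn + 1) * (2 * \<delta> / (bn + 1)) * sn"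
        by (rule mult_right_mono[OF mult_left_mono[OF less_imp_le[OF sr(3)]] snn]) (use b1 in simp)
      also have "\<dots> = 2 * \<delta> * sn" using b1 by simp
      finally show ?thesis .
    qed
    have T3: "\<bar>Q k - Hs k\<bar> \<le> \<delta> * sn"
    proof (cases "s k = 0")
      case True then show ?thesis using s0[OF k] snn dpos by simp
    next
      case False
      then have "sn > 0" unfolding sn_def by simp
      then show ?thesis using omb[OF k] rw(2)[of sn] sr(2) unfolding sn_def by simp
    qed
    have eqAD: "A k - D k = - (f (xs + s k) - f xs - g \<bullet> s k) + (1/2) * (s k \<bullet> (Bm *v s k)) + (Q k - Hs k)"
      unfolding A_def D_def by (simp add: algebra_simps)
    have AD: "A k \<ge> D k - c * sn"
      using T1 T2 T3 eqAD unfolding abs_le_iff \<delta>_def by linarith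
    have Dk: "D k \<ge> (1 - \<theta>1) * xr k" by (rule I2[OF k])
    have Dpos: "D k > 0" using Dk xpos params by (smt (verit) mult_pos_pos)
    have "A k \<ge> \<eta>1 * D k"
    proof -
      have "(1 - \<eta>1) * ((1 - \<theta>1) * xr k) \<le> (1 - \<eta>1) * D k" using Dk params by (intro mult_left_mono) auto
      moreover have "(1 - \<eta>1) * D k = D k - \<eta>1 * D k" by (simp add: algebra_simps)
      ultimately show ?thesis using AD csn by linarith
    qed
    then have "A k / D k \<ge> \<eta>1" using Dpos by (simp add: pos_le_divide_eq)
    then have "\<rho> k \<ge> ereal \<eta>1" using rho_eq[OF k] Dpos by simp
    then show False using K[OF k] by simp
  qed
  define T where "T k = ereal (sqrt (1 / \<nu> k)) * esqrt (xi_cp f gf h \<psi> (x k) (scp k))" for k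
  have Teq: "\<And>k. k \<ge> K \<Longrightarrow> T k = ereal (sqrt (1 / \<nu> k) * sqrt (xr k))"
    unfolding T_def using xi_eq by (simp add: esqrt_def)
  have Tnn: "\<forall>\<^sub>F k in sequentially. 0 \<le> T k"
    using eventually_ge_at_top[of K]
  proof eventually_elim
    fix k assume "K \<le> k"
    then show "0 \<le> T k" using Teq[of k] xr_nn[of k] nu_pos[of k] by simp
  qed
  have L0: "0 \<le> Liminf sequentially T" by (rule Liminf_bounded[OF Tnn])
  have L1: "Liminf sequentially T \<le> 0"
  proof (rule ccontr)
    assume "\<not> Liminf sequentially T \<le> 0"
    then have Lp: "0 < Liminf sequentially T" by simp
    obtain e :: real where e: "e > 0" "ereal e < Liminf sequentially T"
    proof (cases "Liminf sequentially T")
      case (real l) then show ?thesis using that[of "l/2"] Lp by simp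
    next
      case PInf then show ?thesis using that[of 1] by simp
    next
      case MInf then show ?thesis using Lp by simp
    qed
    have "\<forall>\<^sub>F k in sequentially. ereal e < T k" using e(2) le_Liminf_iff by blast
    then have "\<forall>\<^sub>F k in sequentially. e < sqrt (1 / \<nu> k) * sqrt (xr k)"
      using eventually_ge_at_top[of K]
    proof eventually_elim
      fix k assume "K \<le> k" "ereal e < T k"
      then show "e < sqrt (1 / \<nu> k) * sqrt (xr k)" using Teq[of k] by simp
    qed
    then show False using key[OF e(1)] by simp
  qed
  have "Liminf sequentially T = 0" using L0 L1 by simp
  then show ?thesis using part1 unfolding T_def by simp
qed

end
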